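(* Let $\alpha\neq0$ be real and let $u=u(x)$ be a solution of $$\frac{u''}{1-u'^2}=\frac{\alpha}{u},\qquad u>0,\quad u'^2<1,$$ defined on its maximal domain $I\subset\mathbb R$ (an interval). Then $u$ is symmetric about a vertical line, and $I=\mathbb R$ if $\alpha>0$, while $I$ is a bounded interval if $\alpha<0$. Furthermore: (1) If $\alpha>0$, then $u$ is convex with a unique global minimum, $\lim_{r\to\infty}u(r)=\infty$ and $\lim_{r\to\infty}u'(r)=1$. (2) If $\alpha<0$, then $u$ is concave with a unique global maximum, and if $I=(-b,b)$, then $\lim_{r\to b}u(r)=0$ and $\lim_{r\to b}u'(r)=-1$.
   Context: The maximal domain of $u$ is the largest interval on which the solution exists while satisfying $u>0$ and $u'^2<1$. *)

theory Defs
  imports "HOL-Analysis.Analysis"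
begin

definition is_sol :: "real \<Rightarrow> (real \<Rightarrow> real) \<Rightarrow> real set \<Rightarrow> bool" where
  "is_sol \<alpha> u I \<longleftrightarrow> is_interval I \<and> open I \<and> I \<noteq> {} \<and>
     (\<exists>u' u''. \<forall>x\<in>I. (u has_real_derivative u' x) (at x) \<and>
                       (u' has_real_derivative u'' x) (at x) \<and>
                       u x > 0 \<and> (u' x)\<^sup>2 < 1 \<and>
                       u'' x / (1 - (u' x)\<^sup>2) = \<alpha> / u x)"

definition is_maximal_sol :: "real \<Rightarrow> (real \<Rightarrow> real) \<Rightarrow> real set \<Rightarrow> bool" where
  "is_maximal_sol \<alpha> u I \<longleftrightarrow> is_sol \<alpha> u I \<and>
     (\<forall>v J. is_sol \<alpha> v J \<and> I \<subseteq> J \<and> (\<forall>x\<in>I. v x = u x) \<longrightarrow> J = I)"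

end

theory Submission imports Defs "HOL-Analysis.Analysis" begin

lemma antideriv_exists:
  fixes h :: "real \<Rightarrow> real"
  assumes contf: "continuous_on UNIV h"
  shows "\<exists>G. G 0 = 0 \<and> (\<forall>t. (G has_real_derivative h t) (at t))"
proof -
  define G where "G t = integral {-(\<bar>t\<bar>+1)..t} h - integral {-(\<bar>t\<bar>+1)..0} h" for t
  have int: "h integrable_on {a..b}" for a b
    by (rule integrable_continuous_real) (rule continuous_on_subset[OF contf], auto)
  have key: "G t = integral {a..t} h - integral {a..0} h" if "a \<le> t" "a \<le> 0" for a t
  proof -
    define a' where "a' = min a (-(\<bar>t\<bar>+1))"
    have 1: "integral {a'..a} h + integral {a..t} h = integral {a'..t} h"
      by (rule Henstock_Kurzweil_Integration.integral_combine) (use that int in \<open>auto simp: a'_def\<close>)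
    have 2: "integral {a'..a} h + integral {a..0} h = integral {a'..0} h"
      by (rule Henstock_Kurzweil_Integration.integral_combine) (use that int in \<open>auto simp: a'_def\<close>)
    have 3: "integral {a'..(-(\<bar>t\<bar>+1))} h + integral {(-(\<bar>t\<bar>+1))..t} h = integral {a'..t} h"
      by (rule Henstock_Kurzweil_Integration.integral_combine) (use that int in \<open>auto simp: a'_def\<close>)
    have 4: "integral {a'..(-(\<bar>t\<bar>+1))} h + integral {(-(\<bar>t\<bar>+1))..0} h = integral {a'..0} h"
      by (rule Henstock_Kurzweil_Integration.integral_combine) (use that int in \<open>auto simp: a'_def\<close>)
    show ?thesis using 1 2 3 4 unfolding G_def by linarith
  qed
  have "(G has_real_derivative h t) (at t)" for t
  proof -
    define a where "a = -(\<bar>t\<bar>+2)"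
    define b where "b = \<bar>t\<bar>+2"
    have "((\<lambda>x. integral {a..x} h) has_real_derivative h t) (at t within {a..b})"
      by (rule integral_has_real_derivative) (use int contf in \<open>auto simp: a_def b_def intro: continuous_on_subset\<close>)
    also have "at t within {a..b} = at t"
      by (rule at_within_Icc_at) (auto simp: a_def b_def)
    finally have d: "((\<lambda>x. integral {a..x} h - integral {a..0} h) has_real_derivative h t) (at t)"
      by (auto intro!: derivative_eq_intros)
    show ?thesis
      by (rule has_field_derivative_transform_within_open[OF d, of "{a<..}"])
         (auto simp: a_def intro!: key[symmetric])
  qed
  moreover have "G 0 = 0" unfolding G_def by simp
  ultimately show ?thesis by blast
qed


lemma tanh_exp_real: "tanh (z::real) = (exp z * exp z - 1) / (exp z * exp z + 1)"
proof -
  have e: "exp (- z) = 1 / exp z" by (simp add: exp_minus field_simps)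
  have p: "exp z > 0" by simp
  have k: "(a*(a*(a*2)) - a*2)/(a*2 + a*(a*(a*2))) = (a*a-1)/(1+a*a)" if "a > 0" for a :: real
  proof -
    have "a*2 + a*(a*(a*2)) = (2*a) * (1+a*a)" "a*(a*(a*2)) - a*2 = (2*a) * (a*a-1)" by algebra+
    thus ?thesis using that by simp
  qed
  show ?thesis unfolding tanh_def sinh_def cosh_def e
    using p k[OF p] by (simp add: field_simps)
qed

lemma tanh_artanh_real:
  fixes x :: real assumes "\<bar>x\<bar> < 1" shows "tanh (artanh x) = x"
proof -
  have p: "(1 + x) / (1 - x) > 0" using assms by (auto simp: field_simps)
  have e: "exp (artanh x) * exp (artanh x) = (1 + x) / (1 - x)"
    using p by (simp add: artanh_def flip: exp_add)
  show ?thesis using assms unfolding tanh_exp_real e by (auto simp: field_simps)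
qed

lemma inv_deriv_strong:
  fixes f g :: "real \<Rightarrow> real"
  shows "\<lbrakk>DERIV f x :> f'; f' \<noteq> 0; open S; x \<in> S; continuous_on S f;
         \<And>z. z \<in> S \<Longrightarrow> g (f z) = z\<rbrakk>
         \<Longrightarrow> DERIV g (f x) :> inverse (f')"
  unfolding has_field_derivative_def
  by (rule has_derivative_inverse_strong [of S x f g]) auto


theorem theorem2p2:
  fixes \<alpha> :: real and u :: "real \<Rightarrow> real" and I :: "real set"
  assumes "\<alpha> \<noteq> 0"
    and "is_maximal_sol \<alpha> u I"
  shows "(\<exists>c. \<forall>x\<in>I. 2 * c - x \<in> I \<and> u (2 * c - x) = u x)
       \<and> (\<alpha> > 0 \<longrightarrow> I = UNIV)
       \<and> (\<alpha> < 0 \<longrightarrow> bounded I)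
       \<and> (\<alpha> > 0 \<longrightarrow>
            convex_on I u
          \<and> (\<exists>!x0. x0 \<in> I \<and> (\<forall>x\<in>I. u x0 \<le> u x))
          \<and> filterlim u at_top at_top
          \<and> (deriv u \<longlongrightarrow> 1) at_top)
       \<and> (\<alpha> < 0 \<longrightarrow>
            concave_on I u
          \<and> (\<exists>!x0. x0 \<in> I \<and> (\<forall>x\<in>I. u x \<le> u x0))
          \<and> (\<forall>b. I = {-b<..<b} \<longrightarrow>
                 (u \<longlongrightarrow> 0) (at_left b) \<and> (deriv u \<longlongrightarrow> -1) (at_left b)))"
proof -
  define \<gamma> where "\<gamma> = 1 / \<alpha>"
  have ag: "\<alpha> * \<gamma> = 1" using assms(1) by (simp add: \<gamma>_def)
  from assms(2) have sol: "is_sol \<alpha> u I"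
    and maxI: "\<And>v J. is_sol \<alpha> v J \<Longrightarrow> I \<subseteq> J \<Longrightarrow> (\<forall>x\<in>I. v x = u x) \<Longrightarrow> J = I"
    unfolding is_maximal_sol_def by blast+
  from sol have Iint: "is_interval I" and Iopen: "open I" and Ine: "I \<noteq> {}"
    unfolding is_sol_def by auto
  from sol obtain u' u'' where
        uder: "\<And>x. x\<in>I \<Longrightarrow> (u has_real_derivative u' x) (at x)"
    and u'der: "\<And>x. x\<in>I \<Longrightarrow> (u' has_real_derivative u'' x) (at x)"
    and upos: "\<And>x. x\<in>I \<Longrightarrow> u x > 0" and u'b: "\<And>x. x\<in>I \<Longrightarrow> (u' x)\<^sup>2 < 1"
    and ode: "\<And>x. x\<in>I \<Longrightarrow> u'' x / (1 - (u' x)\<^sup>2) = \<alpha> / u x"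
    unfolding is_sol_def by metis
  have u'abs: "\<bar>u' x\<bar> < 1" if "x \<in> I" for x
    using u'b[OF that] by (simp add: abs_square_less_1)
  have u''eq: "u'' x = \<alpha> / u x * (1 - (u' x)\<^sup>2)" if "x \<in> I" for x
  proof -
    have "1 - (u' x)\<^sup>2 > 0" using u'b[OF that] by simp
    thus ?thesis using ode[OF that] by (simp add: field_simps)
  qed
  define s where "s x = artanh (u' x)" for x
  have sder: "(s has_real_derivative \<alpha> / u x) (at x)" if "x \<in> I" for x
  proof -
    have "(s has_real_derivative (1 / (1 - (u' x)\<^sup>2)) * u'' x) (at x)"
      unfolding s_def
      by (rule DERIV_chain2[OF artanh_real_has_field_derivative u'der]) (use u'abs that in auto)
    also have "(1 / (1 - (u' x)\<^sup>2)) * u'' x = \<alpha> / u x"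
      using ode[OF that] by simp
    finally show ?thesis .
  qed
  have u'tanh: "u' x = tanh (s x)" if "x \<in> I" for x
    unfolding s_def using tanh_artanh_real[OF u'abs[OF that]] by simp
  have convI: "convex I" using Iint by (simp add: is_interval_convex)
  have "\<exists>c. \<forall>x\<in>I. ln (u x) - \<gamma> * ln (cosh (s x)) = c"
  proof (rule has_field_derivative_zero_constant[OF convI])
    fix x assume x: "x \<in> I"
    have "((\<lambda>x. ln (u x) - \<gamma> * ln (cosh (s x))) has_real_derivative
            u' x / u x - \<gamma> * (sinh (s x) * (\<alpha> / u x) / cosh (s x))) (at x)"
    proof -
      have d1: "((\<lambda>x. ln (u x)) has_real_derivative 1 / u x * u' x) (at x)"
        by (rule DERIV_chain2[OF DERIV_ln_divide[OF upos[OF x]] uder[OF x]])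
      have d2: "((\<lambda>x. ln (cosh (s x))) has_real_derivative 1 / cosh (s x) * (sinh (s x) * (\<alpha> / u x))) (at x)"
        by (rule DERIV_chain2[OF DERIV_ln_divide has_field_derivative_cosh[OF sder[OF x]]]) simp
      show ?thesis using DERIV_diff[OF d1 DERIV_cmult[OF d2, of \<gamma>]] by (simp add: ac_simps)
    qed
    also have "u' x / u x - \<gamma> * (sinh (s x) * (\<alpha> / u x) / cosh (s x)) = 0"
    proof -
      have "\<gamma> * (sinh (s x) * (\<alpha> / u x) / cosh (s x)) = (\<alpha> * \<gamma>) * tanh (s x) / u x"
        using upos[OF x] by (simp add: tanh_def field_simps)
      thus ?thesis using ag u'tanh[OF x] by simp
    qed
    finally show "((\<lambda>x. ln (u x) - \<gamma> * ln (cosh (s x))) has_real_derivative 0) (at x within I)"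
      by (rule has_field_derivative_at_within)
  qed
  then obtain c1 where c1: "\<And>x. x \<in> I \<Longrightarrow> ln (u x) - \<gamma> * ln (cosh (s x)) = c1" by blast
  define \<Phi> where "\<Phi> t = exp (c1 + \<gamma> * ln (cosh t))" for t
  have uPhi: "u x = \<Phi> (s x)" if "x \<in> I" for x
  proof -
    have "u x = exp (ln (u x))" using upos[OF that] by simp
    also have "ln (u x) = c1 + \<gamma> * ln (cosh (s x))" using c1[OF that] by simp
    finally show ?thesis unfolding \<Phi>_def .
  qed
  have Phipos: "\<Phi> t > 0" for t unfolding \<Phi>_def by simp
  have Phieven: "\<Phi> (-t) = \<Phi> t" for t unfolding \<Phi>_def by simp
  have Phider: "(\<Phi> has_real_derivative \<Phi> t * (\<gamma> * tanh t)) (at t)" for t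
  proof -
    have d1: "((\<lambda>t. ln (cosh t)) has_real_derivative (1 / cosh t * (sinh t * 1))) (at t)"
      by (rule DERIV_chain2[OF DERIV_ln_divide has_field_derivative_cosh[OF DERIV_ident]]) simp
    have d2: "((\<lambda>t. c1 + \<gamma> * ln (cosh t)) has_real_derivative 0 + \<gamma> * (1 / cosh t * (sinh t * 1))) (at t)"
      by (rule DERIV_add[OF DERIV_const DERIV_cmult[OF d1]])
    show ?thesis unfolding \<Phi>_def[abs_def] using DERIV_chain2[OF DERIV_exp d2] by (simp add: tanh_def)
  qed
  have Phicont: "continuous_on UNIV \<Phi>"
    using Phider by (meson DERIV_continuous continuous_at_imp_continuous_on)
  define h where "h t = \<Phi> t / \<alpha>" for t
  have hcont: "continuous_on UNIV h" unfolding h_def[abs_def]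
    by (intro continuous_intros Phicont) (use assms(1) in auto)
  obtain G where G0: "G 0 = 0" and Gder: "\<And>t. (G has_real_derivative h t) (at t)"
    using antideriv_exists[OF hcont] by blast
  have Gcont: "continuous_on A G" for A
    using Gder by (meson DERIV_continuous continuous_at_imp_continuous_on)
  have Godd: "G (-t) = - G t" for t
  proof -
    have "\<forall>x. ((\<lambda>t. G t + G (-t)) has_real_derivative 0) (at x)"
    proof
      fix x
      have "((\<lambda>t. G t + G (-t)) has_real_derivative h x + h (-x) * (-1)) (at x)"
        by (rule DERIV_add Gder DERIV_chain2[OF Gder] DERIV_minus DERIV_ident)+
      thus "((\<lambda>t. G t + G (-t)) has_real_derivative 0) (at x)"
        by (simp add: h_def Phieven)
    qed
    from DERIV_isconst_all[OF this, of t 0] show ?thesis using G0 by simp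
  qed
  have "\<exists>c. \<forall>x\<in>I. G (s x) - x = c"
  proof (rule has_field_derivative_zero_constant[OF convI])
    fix x assume x: "x \<in> I"
    have "((\<lambda>x. G (s x) - x) has_real_derivative h (s x) * (\<alpha> / u x) - 1) (at x)"
      using DERIV_diff[OF DERIV_chain2[OF Gder sder[OF x]] DERIV_ident] by simp
    also have "h (s x) * (\<alpha> / u x) - 1 = 0"
      using assms(1) uPhi[OF x] upos[OF x] by (simp add: h_def)
    finally show "((\<lambda>x. G (s x) - x) has_real_derivative 0) (at x within I)"
      by (rule has_field_derivative_at_within)
  qed
  then obtain c0 where c0': "\<And>x. x \<in> I \<Longrightarrow> G (s x) - x = c0" by blast
  have c0: "G (s x) = x + c0" if "x \<in> I" for x using c0'[OF that] by simp
  have Gmono: "\<And>a b. a < b \<Longrightarrow> (if \<alpha> > 0 then G a < G b else G b < G a)"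
  proof -
    fix a b :: real assume ab: "a < b"
    show "(if \<alpha> > 0 then G a < G b else G b < G a)"
    proof (cases "\<alpha> > 0")
      case True
      have "G a < G b"
        by (rule DERIV_pos_imp_increasing[OF ab]) (use Gder Phipos True in \<open>force simp: h_def\<close>)
      thus ?thesis using True by simp
    next
      case False
      hence "\<alpha> < 0" using assms(1) by simp
      have "G b < G a"
        by (rule DERIV_neg_imp_decreasing[OF ab])
           (use Gder Phipos \<open>\<alpha> < 0\<close> in \<open>force simp: h_def divide_pos_neg\<close>)
      thus ?thesis using False by simp
    qed
  qed
  have injG: "inj G"
  proof (rule injI)
    fix a b assume "G a = G b"
    thus "a = b" using Gmono[of a b] Gmono[of b a]
      by (cases a b rule: linorder_cases) (auto split: if_splits)
  qed
  define S where "S = inv G"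
  have SG: "S (G t) = t" for t unfolding S_def using injG by simp
  have GS: "y \<in> range G \<Longrightarrow> G (S y) = y" for y unfolding S_def by (simp add: f_inv_into_f)
  have Sder: "(S has_real_derivative \<alpha> / \<Phi> (S y)) (at y)" if "y \<in> range G" for y
  proof -
    have "(S has_real_derivative inverse (h (S y))) (at (G (S y)))"
      by (rule inv_deriv_strong[OF Gder _ open_UNIV UNIV_I Gcont SG])
         (use Phipos[of "S y"] assms(1) in \<open>simp add: h_def\<close>)
    thus ?thesis using GS[OF that] by (simp add: h_def)
  qed
  have sS: "s x = S (x + c0)" if "x \<in> I" for x
    using SG[of "s x"] c0[OF that] by simp
  have inR: "x + c0 \<in> range G" if "x \<in> I" for x
    using c0[OF that] by (metis rangeI)
  have ext: "D = I" if Dint: "is_interval D" and Dopen: "open D" and ID: "I \<subseteq> D"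
     and DR: "\<And>x. x \<in> D \<Longrightarrow> x + c0 \<in> range G" for D
  proof -
    define v where "v x = \<Phi> (S (x + c0))" for x
    have "is_sol \<alpha> v D"
      unfolding is_sol_def
    proof (intro conjI Dint Dopen exI ballI)
      show "D \<noteq> {}" using Ine ID by blast
      fix x assume x: "x \<in> D"
      have Sd: "((\<lambda>x. S (x + c0)) has_real_derivative \<alpha> / \<Phi> (S (x + c0))) (at x)"
      proof -
        have d: "((\<lambda>x. x + c0) has_real_derivative 1) (at x)"
          by (rule derivative_eq_intros refl)+ simp
        show ?thesis using DERIV_chain2[where g="\<lambda>x. x + c0", OF Sder[OF DR[OF x]] d] by simp
      qed
      have "(v has_real_derivative \<Phi> (S (x + c0)) * (\<gamma> * tanh (S (x + c0))) * (\<alpha> / \<Phi> (S (x + c0)))) (at x)"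
        unfolding v_def by (rule DERIV_chain2[OF Phider Sd])
      also have "\<Phi> (S (x + c0)) * (\<gamma> * tanh (S (x + c0))) * (\<alpha> / \<Phi> (S (x + c0))) = tanh (S (x + c0))"
        using Phipos[of "S (x + c0)"] ag by (simp add: field_simps)
      finally show "(v has_real_derivative tanh (S (x + c0))) (at x)" .
      show "((\<lambda>x. tanh (S (x + c0))) has_real_derivative
              (1 - (tanh (S (x + c0)))\<^sup>2) * (\<alpha> / \<Phi> (S (x + c0)))) (at x)"
        by (rule has_field_derivative_tanh[OF _ Sd]) simp
      show "v x > 0" unfolding v_def by (rule Phipos)
      have tb: "\<bar>tanh (S (x + c0))\<bar> < 1" using tanh_real_bounds[of "S (x + c0)"] by auto
      thus "(tanh (S (x + c0)))\<^sup>2 < 1" by (simp add: abs_square_less_1)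
      hence "1 - (tanh (S (x + c0)))\<^sup>2 \<noteq> 0" by simp
      thus "(1 - (tanh (S (x + c0)))\<^sup>2) * (\<alpha> / \<Phi> (S (x + c0))) / (1 - (tanh (S (x + c0)))\<^sup>2) = \<alpha> / v x"
        unfolding v_def by simp
    qed
    moreover have "\<forall>x\<in>I. v x = u x" using uPhi sS by (simp add: v_def)
    ultimately show "D = I" using maxI ID by blast
  qed
  have Rsym: "-y \<in> range G" if "y \<in> range G" for y
  proof -
    from that obtain t where "y = G t" by blast
    hence "-y = G (-t)" using Godd by simp
    thus ?thesis by blast
  qed
  have R0: "0 \<in> range G" using G0 by (metis rangeI)
  have SGodd: "S (-y) = - S y" if "y \<in> range G" for y
  proof -
    have "G (- S y) = -y" using Godd GS[OF that] by simp
    thus ?thesis using SG[of "- S y"] by simp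
  qed
  have rUNIV: "range G = UNIV" if True: "\<alpha> > 0"
  proof -
    from True have gpos: "\<gamma> > 0" by (simp add: \<gamma>_def)
    define k where "k = exp c1 / \<alpha>"
    have kpos: "k > 0" using True by (simp add: k_def)
    have Phige: "\<Phi> t \<ge> exp c1" for t
    proof -
      have "ln (cosh t) \<ge> 0" using cosh_real_ge_1[of t] by simp
      hence "\<gamma> * ln (cosh t) \<ge> 0" using gpos by simp
      thus ?thesis unfolding \<Phi>_def by simp
    qed
    have Gk: "G t \<ge> k * t" if "t \<ge> 0" for t
    proof -
      have "(\<lambda>t. G t - k * t) 0 \<le> (\<lambda>t. G t - k * t) t"
      proof (rule deriv_nonneg_imp_mono[OF _ _ that])
        fix x
        show "((\<lambda>t. G t - k * t) has_real_derivative h x - k * 1) (at x)"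
          by (rule DERIV_diff Gder DERIV_cmult DERIV_ident)+
        show "h x - k * 1 \<ge> 0" using Phige[of x] True
          by (simp add: h_def k_def divide_right_mono)
      qed
      thus ?thesis using G0 by simp
    qed
    have rU: "y \<in> range G" for y
    proof -
      have pos: "z \<in> range G" if z0: "z \<ge> 0" for z
      proof -
        have "G (z / k) \<ge> z" using Gk[of "z / k"] z0 kpos by simp
        then obtain t where "G t = z" using IVT'[of G 0 z "z / k"] G0 z0 kpos Gcont
          by (auto simp: field_simps)
        thus ?thesis by (metis rangeI)
      qed
      show ?thesis
      proof (cases "y \<ge> 0")
        case True thus ?thesis by (rule pos)
      next
        case False
        hence "-y \<in> range G" by (intro pos) simp
        from Rsym[OF this] show ?thesis by simp
      qed
    qed
    show ?thesis using rU by auto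
  qed
  have rL: "\<exists>L. \<forall>y. y \<in> range G \<longleftrightarrow> y \<in> {-L<..<L}" if False: "\<alpha> < 0"
  proof -
    have aneg: "\<alpha> < 0" by (rule False)
    hence gneg: "\<gamma> < 0" by (simp add: \<gamma>_def)
    define B where "B = exp (c1 - \<gamma> * ln 2) / (- \<alpha>)"
    have Bpos: "B > 0" using aneg by (simp add: B_def divide_pos_neg)
    have Phile: "\<Phi> t \<le> exp (c1 - \<gamma> * ln 2) * exp (\<gamma> * t)" for t
    proof -
      have "cosh t \<ge> exp t / 2" by (simp add: cosh_def)
      hence "ln (cosh t) \<ge> ln (exp t / 2)" by (subst ln_le_cancel_iff) auto
      hence "ln (cosh t) \<ge> t - ln 2" by (simp add: ln_div)
      hence "\<gamma> * ln (cosh t) \<le> \<gamma> * (t - ln 2)" using gneg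
        by (simp add: mult_left_mono_neg)
      hence "c1 + \<gamma> * ln (cosh t) \<le> (c1 - \<gamma> * ln 2) + \<gamma> * t" by (simp add: algebra_simps)
      hence "\<Phi> t \<le> exp ((c1 - \<gamma> * ln 2) + \<gamma> * t)" unfolding \<Phi>_def by simp
      thus ?thesis by (simp add: exp_add)
    qed
    define M where "M = - B / \<gamma>"
    have Mpos: "M \<ge> 0" using Bpos gneg by (simp add: M_def divide_pos_neg less_imp_le)
    have Gge: "- G t \<le> M" if "t \<ge> 0" for t
    proof -
      define F where "F t = (B / \<gamma>) * (exp (\<gamma> * t) - 1)" for t
      have "(\<lambda>t. F t + G t) 0 \<le> (\<lambda>t. F t + G t) t"
      proof (rule deriv_nonneg_imp_mono[OF _ _ that])
        fix x
        have "((\<lambda>t. F t + G t) has_real_derivative (B / \<gamma>) * (exp (\<gamma> * x) * (\<gamma> * 1) - 0) + h x) (at x)"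
          unfolding F_def
          by (rule DERIV_add DERIV_cmult DERIV_diff Gder DERIV_const
                DERIV_chain2[OF DERIV_exp] DERIV_ident)+
        thus "((\<lambda>t. F t + G t) has_real_derivative B * exp (\<gamma> * x) + h x) (at x)"
          using gneg by simp
        have "- h x \<le> B * exp (\<gamma> * x)"
          using Phile[of x] aneg by (simp add: h_def B_def field_simps)
        thus "B * exp (\<gamma> * x) + h x \<ge> 0" by simp
      qed
      hence "- G t \<le> F t" using G0 by (simp add: F_def)
      also have "F t \<le> M"
      proof -
        have "(B / \<gamma>) * exp (\<gamma> * t) \<le> 0" using Bpos gneg
          by (simp add: mult_nonpos_nonneg divide_pos_neg less_imp_le)
        thus ?thesis by (simp add: F_def M_def algebra_simps)
      qed
      finally show ?thesis .
    qed
    have GleM: "G t \<le> M" for t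
    proof (cases "t \<ge> 0")
      case True
      have "G t \<le> G 0" using Gmono[of 0 t] aneg True by (cases "t = 0") auto
      thus ?thesis using G0 Mpos by simp
    next
      case False
      thus ?thesis using Gge[of "-t"] Godd[of t] by simp
    qed
    have bdd: "bdd_above (range G)" by (rule bdd_aboveI[of _ M]) (use GleM in auto)
    define L where "L = Sup (range G)"
    have GltL: "G t < L" for t
    proof -
      have "G t < G (t - 1)" using Gmono[of "t - 1" t] aneg by simp
      also have "G (t - 1) \<le> L" unfolding L_def by (rule cSup_upper[OF _ bdd]) simp
      finally show ?thesis .
    qed
    have rng: "y \<in> range G \<longleftrightarrow> y \<in> {-L<..<L}" for y
    proof
      assume "y \<in> range G"
      then obtain t where t: "y = G t" by blast
      have "-y < L" using GltL[of "-t"] Godd[of t] t by simp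
      thus "y \<in> {-L<..<L}" using GltL[of t] t by simp
    next
      assume y: "y \<in> {-L<..<L}"
      hence "\<bar>y\<bar> < Sup (range G)" unfolding L_def by auto
      then obtain t where t: "G t > \<bar>y\<bar>" using less_cSup_iff[OF _ bdd] by auto
      have "G (-t) < y" using t Godd[of t] by simp
      have yG: "y \<le> G t" using t by simp
      have tt: "t < -t"
      proof (rule ccontr)
        assume "\<not> t < -t"
        hence "-t \<le> t" by simp
        hence "G t \<le> G (-t)" using Gmono[of "-t" t] aneg by (cases "-t = t") auto
        thus False using t Godd[of t] by simp
      qed
      obtain z where "G z = y" using IVT2'[of G "-t" y t] \<open>G (-t) < y\<close> yG tt Gcont by force
      thus "y \<in> range G" by (metis rangeI)
    qed
    show ?thesis using rng by blast
  qed
  have Ichar: "x \<in> I \<longleftrightarrow> x + c0 \<in> range G" for x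
  proof (cases "\<alpha> > 0")
    case True
    have "UNIV = I" by (rule ext) (auto simp: rUNIV[OF True] is_interval_univ)
    thus ?thesis using rUNIV[OF True] by auto
  next
    case False
    then obtain L where rng: "\<And>y. y \<in> range G \<longleftrightarrow> y \<in> {-L<..<L}" using rL assms(1) by force
    define D where "D = {-L-c0<..<L-c0}"
    have Dch: "x \<in> D \<longleftrightarrow> x + c0 \<in> range G" for x
      unfolding D_def rng by auto
    have "D = I"
    proof (rule ext)
      show "is_interval D" unfolding D_def by (rule is_interval_oo)
      show "open D" unfolding D_def by simp
      show "I \<subseteq> D" using inR Dch by blast
      show "\<And>x. x \<in> D \<Longrightarrow> x + c0 \<in> range G" using Dch by blast
    qed
    thus ?thesis using Dch by auto
  qed
  define x0 where "x0 = - c0"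
  have x0I: "x0 \<in> I" using Ichar[of x0] R0 by (simp add: x0_def)
  have sx0: "s x0 = 0" using sS[OF x0I] SG[of 0] G0 by (simp add: x0_def)
  have ux0: "u x0 = exp c1" using uPhi[OF x0I] sx0 by (simp add: \<Phi>_def)
  have snz: "s x \<noteq> 0" if "x \<in> I" "x \<noteq> x0" for x
  proof
    assume "s x = 0"
    hence "x + c0 = 0" using c0[OF that(1)] G0 by simp
    thus False using that(2) by (simp add: x0_def)
  qed
  have lncosh: "ln (cosh t) > 0" if "t \<noteq> 0" for t :: real
  proof -
    have "cosh 0 < cosh \<bar>t\<bar>" using that by (subst cosh_real_nonneg_less_iff) auto
    also have "cosh \<bar>t\<bar> = cosh t" by (cases "t \<ge> 0") auto
    finally show ?thesis by simp
  qed
  have ucmp: "u x = exp (c1 + \<gamma> * ln (cosh (s x)))" if "x \<in> I" for x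
    using uPhi[OF that] by (simp add: \<Phi>_def)
  have symm: "\<exists>c. \<forall>x\<in>I. 2 * c - x \<in> I \<and> u (2 * c - x) = u x"
  proof (intro exI ballI conjI)
    fix x assume x: "x \<in> I"
    have e: "2 * x0 - x + c0 = - (x + c0)" by (simp add: x0_def)
    show xI: "2 * x0 - x \<in> I" using Ichar[of "2 * x0 - x"] e Rsym[OF inR[OF x]] by simp
    have "u (2 * x0 - x) = \<Phi> (S (- (x + c0)))" using uPhi[OF xI] sS[OF xI] e by simp
    also have "\<dots> = \<Phi> (S (x + c0))" using SGodd[OF inR[OF x]] Phieven by simp
    also have "\<dots> = u x" using uPhi[OF x] sS[OF x] by simp
    finally show "u (2 * x0 - x) = u x" .
  qed
  have u'mono: "u' x \<le> u' y" if "x \<in> I" "y \<in> I" "x \<le> y" "\<alpha> > 0" for x y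
  proof (cases "x = y")
    case False
    hence xy: "x < y" using that by simp
    have "u' x < u' y"
    proof (rule DERIV_pos_imp_increasing[OF xy])
      fix z assume "x \<le> z" "z \<le> y"
      hence z: "z \<in> I" using Iint that unfolding is_interval_1 by blast
      have "u'' z > 0" using u''eq[OF z] upos[OF z] u'b[OF z] that(4) by simp
      thus "\<exists>y. (u' has_real_derivative y) (at z) \<and> y > 0" using u'der[OF z] by blast
    qed
    thus ?thesis by simp
  qed simp
  have u'mono2: "- u' x \<le> - u' y" if "x \<in> I" "y \<in> I" "x \<le> y" "\<alpha> < 0" for x y
  proof (cases "x = y")
    case False
    hence xy: "x < y" using that by simp
    have "(\<lambda>x. - u' x) x < (\<lambda>x. - u' x) y"
    proof (rule DERIV_pos_imp_increasing[OF xy])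
      fix z assume "x \<le> z" "z \<le> y"
      hence z: "z \<in> I" using Iint that unfolding is_interval_1 by blast
      have n1: "\<alpha> / u z < 0" using upos[OF z] that(4) by (simp add: divide_neg_pos)
      have n2: "1 - (u' z)\<^sup>2 > 0" using u'b[OF z] by simp
      have "u'' z = (\<alpha> / u z) * (1 - (u' z)\<^sup>2)" by (rule u''eq[OF z])
      also have "\<dots> < 0" by (rule mult_neg_pos[OF n1 n2])
      finally have "u'' z < 0" .
      thus "\<exists>y. ((\<lambda>x. - u' x) has_real_derivative y) (at z) \<and> y > 0"
        using DERIV_minus[OF u'der[OF z]] by force
    qed
    thus ?thesis by simp
  qed simp
  have conI: "connected I" using Iint by (simp add: is_interval_connected)
  have part_pos: "\<alpha> > 0 \<longrightarrow> I = UNIV \<and> convex_on I u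
          \<and> (\<exists>!x0. x0 \<in> I \<and> (\<forall>x\<in>I. u x0 \<le> u x))
          \<and> filterlim u at_top at_top
          \<and> (deriv u \<longlongrightarrow> 1) at_top"
  proof
    assume apos: "\<alpha> > 0"
    hence gpos: "\<gamma> > 0" by (simp add: \<gamma>_def)
    have IU: "I = UNIV" using Ichar rUNIV[OF apos] by auto
    have cvx: "convex_on I u"
      by (rule convex_on_realI[OF conI uder]) (use u'mono apos in auto)
    have gt: "u x > exp c1" if "x \<in> I" "x \<noteq> x0" for x
    proof -
      have "\<gamma> * ln (cosh (s x)) > 0" using lncosh[OF snz[OF that]] gpos by simp
      thus ?thesis using ucmp[OF that(1)] by simp
    qed
    have umin: "\<exists>!x0. x0 \<in> I \<and> (\<forall>x\<in>I. u x0 \<le> u x)"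
    proof (rule ex1I[of _ x0])
      show "x0 \<in> I \<and> (\<forall>x\<in>I. u x0 \<le> u x)"
        using x0I ux0 gt by (metis less_imp_le order_refl)
      fix y assume y: "y \<in> I \<and> (\<forall>x\<in>I. u y \<le> u x)"
      show "y = x0"
      proof (rule ccontr)
        assume "y \<noteq> x0"
        hence "u y > u x0" using gt y ux0 by simp
        thus False using y x0I by force
      qed
    qed
    have slim: "filterlim s at_top at_top"
      unfolding filterlim_at_top
    proof
      fix Z
      show "\<forall>\<^sub>F x in at_top. Z \<le> s x"
        using eventually_ge_at_top[of "G Z - c0"]
      proof eventually_elim
        case (elim x)
        show ?case
        proof (rule ccontr)
          assume "\<not> Z \<le> s x"
          hence "G (s x) < G Z" using Gmono[of "s x" Z] apos by simp
          thus False using c0[of x] IU elim by simp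
        qed
      qed
    qed
    have Philim: "filterlim \<Phi> at_top at_top"
    proof -
      have "filterlim (\<lambda>t. \<gamma> * ln (cosh t)) at_top at_top"
        by (rule filterlim_tendsto_pos_mult_at_top[OF tendsto_const gpos
              filterlim_compose[OF ln_at_top cosh_real_at_top]])
      hence "filterlim (\<lambda>t. c1 + \<gamma> * ln (cosh t)) at_top at_top"
        by (rule filterlim_tendsto_add_at_top[OF tendsto_const])
      thus ?thesis unfolding \<Phi>_def[abs_def] by (rule filterlim_compose[OF exp_at_top])
    qed
    have ueq: "u = (\<lambda>x. \<Phi> (s x))" using uPhi IU by auto
    have ulim: "filterlim u at_top at_top"
      unfolding ueq by (rule filterlim_compose[OF Philim slim])
    have deq: "deriv u = (\<lambda>x. tanh (s x))"
      using DERIV_imp_deriv[OF uder] u'tanh IU by auto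
    have dlim: "(deriv u \<longlongrightarrow> 1) at_top"
      unfolding deq by (rule filterlim_compose[OF tanh_real_at_top slim])
    show "I = UNIV \<and> convex_on I u
          \<and> (\<exists>!x0. x0 \<in> I \<and> (\<forall>x\<in>I. u x0 \<le> u x))
          \<and> filterlim u at_top at_top
          \<and> (deriv u \<longlongrightarrow> 1) at_top"
      by (intro conjI IU cvx umin ulim dlim)
  qed
  have part_neg: "\<alpha> < 0 \<longrightarrow> bounded I \<and> concave_on I u
          \<and> (\<exists>!x0. x0 \<in> I \<and> (\<forall>x\<in>I. u x \<le> u x0))
          \<and> (\<forall>b. I = {-b<..<b} \<longrightarrow>
                 (u \<longlongrightarrow> 0) (at_left b) \<and> (deriv u \<longlongrightarrow> -1) (at_left b))"
  proof
    assume aneg: "\<alpha> < 0"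
    hence gneg: "\<gamma> < 0" by (simp add: \<gamma>_def)
    obtain L where rng: "\<And>y. y \<in> range G \<longleftrightarrow> y \<in> {-L<..<L}" using rL[OF aneg] by blast
    have ID: "I = {-L-c0<..<L-c0}"
    proof (rule set_eqI)
      fix x show "x \<in> I \<longleftrightarrow> x \<in> {-L-c0<..<L-c0}" using Ichar[of x] rng[of "x + c0"] by auto
    qed
    have bdd: "bounded I" unfolding ID by simp
    have ccv: "concave_on I u"
      unfolding concave_on_def
      by (rule convex_on_realI[OF conI DERIV_minus[OF uder]]) (use u'mono2 aneg in auto)
    have lt: "u x < exp c1" if "x \<in> I" "x \<noteq> x0" for x
    proof -
      have "\<gamma> * ln (cosh (s x)) < 0"
        using lncosh[OF snz[OF that]] gneg by (simp add: mult_neg_pos)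
      thus ?thesis using ucmp[OF that(1)] by simp
    qed
    have umax: "\<exists>!x0. x0 \<in> I \<and> (\<forall>x\<in>I. u x \<le> u x0)"
    proof (rule ex1I[of _ x0])
      show "x0 \<in> I \<and> (\<forall>x\<in>I. u x \<le> u x0)"
        using x0I ux0 lt by (metis less_imp_le order_refl)
      fix y assume y: "y \<in> I \<and> (\<forall>x\<in>I. u x \<le> u y)"
      show "y = x0"
      proof (rule ccontr)
        assume "y \<noteq> x0"
        hence "u y < u x0" using lt y ux0 by simp
        thus False using y x0I by force
      qed
    qed
    have Philim: "(\<Phi> \<longlongrightarrow> 0) at_bot"
    proof -
      have "filterlim (\<lambda>t. \<gamma> * ln (cosh t)) at_bot at_bot"
        by (rule filterlim_tendsto_neg_mult_at_bot[OF tendsto_const gneg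
              filterlim_compose[OF ln_at_top cosh_real_at_bot]])
      hence "((\<lambda>t. exp (\<gamma> * ln (cosh t))) \<longlongrightarrow> 0) at_bot"
        by (rule filterlim_compose[OF exp_at_bot])
      hence "((\<lambda>t. exp c1 * exp (\<gamma> * ln (cosh t))) \<longlongrightarrow> exp c1 * 0) at_bot"
        by (rule tendsto_mult[OF tendsto_const])
      thus ?thesis unfolding \<Phi>_def[abs_def] by (simp add: exp_add)
    qed
    have ends: "(u \<longlongrightarrow> 0) (at_left b) \<and> (deriv u \<longlongrightarrow> -1) (at_left b)"
      if Ib: "I = {-b<..<b}" for b
    proof -
      have ne: "-L-c0 < L-c0" using ID Ine by auto
      have nb: "-b < b" using Ib Ine by auto
      have "b = L - c0"
        using arg_cong[OF Ib, of Sup] ID cSup_greaterThanLessThan[OF ne] cSup_greaterThanLessThan[OF nb]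
        by simp
      hence bL: "b + c0 = L" by simp
      have ev: "\<forall>\<^sub>F x in at_left b. x \<in> I" using eventually_at_left_real[OF nb] Ib by simp
      have slim: "filterlim s at_bot (at_left b)"
        unfolding filterlim_at_bot
      proof
        fix Z
        have GZ: "G Z < L" using rng[of "G Z"] by auto
        define m where "m = max (G Z - c0) (-b)"
        have mb: "m < b" using GZ bL nb by (simp add: m_def)
        show "\<forall>\<^sub>F x in at_left b. s x \<le> Z"
          using eventually_at_left_real[OF mb]
        proof eventually_elim
          case (elim x)
          hence xI: "x \<in> I" using Ib by (auto simp: m_def)
          show ?case
          proof (rule ccontr)
            assume "\<not> s x \<le> Z"
            hence "G (s x) < G Z" using Gmono[of Z "s x"] aneg by simp
            thus False using c0[OF xI] elim by (simp add: m_def)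
          qed
        qed
      qed
      have l1: "((\<lambda>x. \<Phi> (s x)) \<longlongrightarrow> 0) (at_left b)"
        by (rule filterlim_compose[OF Philim slim])
      have l2: "((\<lambda>x. tanh (s x)) \<longlongrightarrow> -1) (at_left b)"
        by (rule filterlim_compose[OF tanh_real_at_bot slim])
      have "(u \<longlongrightarrow> 0) (at_left b)"
        by (rule Lim_transform_eventually[OF l1]) (use ev in \<open>eventually_elim, simp add: uPhi\<close>)
      moreover have "(deriv u \<longlongrightarrow> -1) (at_left b)"
        by (rule Lim_transform_eventually[OF l2])
           (use ev in \<open>eventually_elim, simp add: DERIV_imp_deriv[OF uder] u'tanh\<close>)
      ultimately show ?thesis by blast
    qed
    show "bounded I \<and> concave_on I u
          \<and> (\<exists>!x0. x0 \<in> I \<and> (\<forall>x\<in>I. u x \<le> u x0))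
          \<and> (\<forall>b. I = {-b<..<b} \<longrightarrow>
                 (u \<longlongrightarrow> 0) (at_left b) \<and> (deriv u \<longlongrightarrow> -1) (at_left b))"
      by (intro conjI allI impI bdd ccv umax ends)
  qed
  have p1: "\<alpha> > 0 \<longrightarrow> I = UNIV"
  proof
    assume "\<alpha> > 0" from mp[OF part_pos this] show "I = UNIV" by (rule conjunct1)
  qed
  have p2: "\<alpha> > 0 \<longrightarrow> convex_on I u
          \<and> (\<exists>!x0. x0 \<in> I \<and> (\<forall>x\<in>I. u x0 \<le> u x))
          \<and> filterlim u at_top at_top
          \<and> (deriv u \<longlongrightarrow> 1) at_top"
  proof
    assume "\<alpha> > 0" from mp[OF part_pos this] show "convex_on I u
          \<and> (\<exists>!x0. x0 \<in> I \<and> (\<forall>x\<in>I. u x0 \<le> u x))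
          \<and> filterlim u at_top at_top
          \<and> (deriv u \<longlongrightarrow> 1) at_top" by (rule conjunct2)
  qed
  have n1: "\<alpha> < 0 \<longrightarrow> bounded I"
  proof
    assume "\<alpha> < 0" from mp[OF part_neg this] show "bounded I" by (rule conjunct1)
  qed
  have n2: "\<alpha> < 0 \<longrightarrow> concave_on I u
          \<and> (\<exists>!x0. x0 \<in> I \<and> (\<forall>x\<in>I. u x \<le> u x0))
          \<and> (\<forall>b. I = {-b<..<b} \<longrightarrow>
                 (u \<longlongrightarrow> 0) (at_left b) \<and> (deriv u \<longlongrightarrow> -1) (at_left b))"
  proof
    assume "\<alpha> < 0" from mp[OF part_neg this] show "concave_on I u
          \<and> (\<exists>!x0. x0 \<in> I \<and> (\<forall>x\<in>I. u x \<le> u x0))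
          \<and> (\<forall>b. I = {-b<..<b} \<longrightarrow>
                 (u \<longlongrightarrow> 0) (at_left b) \<and> (deriv u \<longlongrightarrow> -1) (at_left b))" by (rule conjunct2)
  qed
  show ?thesis by (rule conjI[OF symm conjI[OF p1 conjI[OF n1 conjI[OF p2 n2]]]])
qed

end
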